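(* Let $\mathcal{H}$ be a $k$-conformal hypergraph on vertex set $V$ (with $k\le|V|$). If $E\in\mathrm{ext}_k(\mathcal{H})$, then there exists $F\in\mathcal{H}$ with $E\subseteq F$.
   Context: $\mathcal{H}$ is $k$-conformal if every inclusion-minimal subset of $V$ that is not contained in any hyperedge of $\mathcal{H}$ has size at most $k$. A $k$-trace on $V$ is a pair $(T,S)$ with $S\subseteq V$, $|S|=k$, $T\subseteq S$; $F$ realizes it if $F\cap S=T$. $\mathrm{traces}_k(\mathcal{H})$ is the set of $k$-traces realized by hyperedges of $\mathcal{H}$, and $\mathrm{ext}_k(\mathcal{H})$ is the hypergraph on $V$ of all $E\subseteq V$ such that every $k$-trace realized by $E$ lies in $\mathrm{traces}_k(\mathcal{H})$. *)

theory Defs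
  imports Main
begin

definition hypergraph :: "'a set \<Rightarrow> 'a set set \<Rightarrow> bool" where
  "hypergraph V H \<longleftrightarrow> (\<forall>F\<in>H. F \<subseteq> V)"

definition covered :: "'a set set \<Rightarrow> 'a set \<Rightarrow> bool" where
  "covered H X \<longleftrightarrow> (\<exists>F\<in>H. X \<subseteq> F)"

definition k_conformal :: "'a set \<Rightarrow> 'a set set \<Rightarrow> nat \<Rightarrow> bool" where
  "k_conformal V H k \<longleftrightarrow>
     (\<forall>X. X \<subseteq> V \<and> \<not> covered H X \<and> (\<forall>Y. Y \<subset> X \<longrightarrow> covered H Y) \<longrightarrow> card X \<le> k)"

definition k_trace :: "'a set \<Rightarrow> nat \<Rightarrow> 'a set \<times> 'a set \<Rightarrow> bool" where
  "k_trace V k TS \<longleftrightarrow> (case TS of (T, S) \<Rightarrow> S \<subseteq> V \<and> card S = k \<and> T \<subseteq> S)"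

definition realizes :: "'a set \<Rightarrow> 'a set \<times> 'a set \<Rightarrow> bool" where
  "realizes F TS \<longleftrightarrow> (case TS of (T, S) \<Rightarrow> F \<inter> S = T)"

definition traces_k :: "'a set \<Rightarrow> nat \<Rightarrow> 'a set set \<Rightarrow> ('a set \<times> 'a set) set" where
  "traces_k V k H = {TS. k_trace V k TS \<and> (\<exists>F\<in>H. realizes F TS)}"

definition ext_k :: "'a set \<Rightarrow> nat \<Rightarrow> 'a set set \<Rightarrow> 'a set set" where
  "ext_k V k H = {E. E \<subseteq> V \<and> (\<forall>TS. k_trace V k TS \<and> realizes E TS \<longrightarrow> TS \<in> traces_k V k H)}"

end

theory Submission
  imports Defs
begin

theorem proposition2:
  fixes V :: "'a set" and H :: "'a set set" and k :: nat and E :: "'a set"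
  assumes "finite V"
    and "hypergraph V H"
    and "k_conformal V H k"
    and "k \<le> card V"
    and "E \<in> ext_k V k H"
  shows "\<exists>F\<in>H. E \<subseteq> F"
proof (rule ccontr)
  assume nc: "\<not> (\<exists>F\<in>H. E \<subseteq> F)"
  have EV: "E \<subseteq> V" using assms(5) by (simp add: ext_k_def)
  have fE: "finite E" using EV assms(1) finite_subset by blast
  define P where "P = (\<lambda>X. X \<subseteq> E \<and> \<not> covered H X)"
  have "P E" using nc by (simp add: P_def covered_def)
  then obtain X where PX: "P X" and minX: "\<And>Y. P Y \<Longrightarrow> card X \<le> card Y"
    using ex_has_least_nat[of P E card] by blast
  have XE: "X \<subseteq> E" and ncX: "\<not> covered H X" using PX by (auto simp: P_def)
  have fX: "finite X" using XE fE finite_subset by blast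
  have sub: "\<forall>Y. Y \<subset> X \<longrightarrow> covered H Y"
  proof (intro allI impI)
    fix Y assume "Y \<subset> X"
    then have "card Y < card X" using fX psubset_card_mono by blast
    moreover have "Y \<subseteq> E" using \<open>Y \<subset> X\<close> XE by blast
    ultimately show "covered H Y" using minX[of Y] by (auto simp: P_def)
  qed
  have XV: "X \<subseteq> V" using XE EV by blast
  have ck: "card X \<le> k" using assms(3) XV ncX sub by (simp add: k_conformal_def)
  have "card (V - X) = card V - card X" using XV fX by (simp add: card_Diff_subset)
  then have "k - card X \<le> card (V - X)" using assms(4) by linarith
  then obtain B where B: "B \<subseteq> V - X" "card B = k - card X" "finite B"
    by (rule obtain_subset_with_card_n)
  define S where "S = X \<union> B"
  have fB: "finite B" using B(3) .
  have cS: "card S = k" unfolding S_def using B fB fX ck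
    by (subst card_Un_disjoint) auto
  have SV: "S \<subseteq> V" using B XV S_def by blast
  have "k_trace V k (E \<inter> S, S)" using cS SV by (simp add: k_trace_def)
  moreover have "realizes E (E \<inter> S, S)" by (simp add: realizes_def)
  ultimately have "(E \<inter> S, S) \<in> traces_k V k H" using assms(5) by (simp add: ext_k_def)
  then obtain F where "F \<in> H" "F \<inter> S = E \<inter> S" by (auto simp: traces_k_def realizes_def)
  then have "X \<subseteq> F" using XE S_def by blast
  then show False using ncX \<open>F \<in> H\<close> by (auto simp: covered_def)
qed

end
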